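(* Consider a storage system in which each object $f_i$ can be downloaded either from its systematic server or from any one of $t$ disjoint recovery groups, each consisting of $r$ servers, under the Fork-Join access model, with all service times i.i.d. $\mathrm{Exp}(\mu)$. Under the low-traffic regime, the download time $T_{\text{FJ-}(r,t)}$ of a request satisfies, for all $s \ge 0$, $$\Pr\{T_{\text{FJ-}(r,t)} > s\} = e^{-\mu s}\left(1 - (1 - e^{-\mu s})^r\right)^t,$$ and $$\mathbb{E}[T_{\text{FJ-}(r,t)}] = \frac{1}{\mu r}\,\beta\!\left(t+1, \frac{1}{r}\right),$$ where $\beta(x,y)=\int_0^1 v^{x-1}(1-v)^{y-1}\,dv$ is the beta function.
   Context: Storage model: $k$ objects $f_1,\dots,f_k$ (symbols of a finite field) are encoded by a systematic $(n,k)$ linear code and the $n$ coded symbols are stored on $n$ distinct servers. The code has $(r,t)$-availability: for each systematic server $i$ (storing $f_i$) there are $t$ pairwise disjoint recovery groups, each a set of $r$ servers not containing server $i$, such that $f_i$ can be recovered from the contents of any one recovery group. Fork-Join access model: when a request for $f_i$ arrives, it is replicated into $t+1$ copies, one sent to systematic server $i$ and one to each of the $t$ recovery groups; a copy sent to a recovery group is forked into $r$ sub-copies, one to each server of the group, and that copy completes when all $r$ sub-copies have finished service. The request completes as soon as either its copy at the systematic server finishes or its copy at some recovery group completes; all its remaining copies are then immediately removed at no cost. Each server serves one (sub-)copy at a time, and service times are independent across servers and copies, each distributed as $\mathrm{Exp}(\mu)$. The download time of a request is its departure time minus its arrival time. Low-traffic regime: each request is completed before the next request arrives, so at most one request is in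 the system at any time. *)

theory Defs
  imports "HOL-Probability.Probability"
begin

text \<open>Index set of the service-time variables of one request under the Fork-Join
  model: None is the copy at the systematic server, Some (j, l) is the sub-copy at
  server l of recovery group j (j < t, l < r).\<close>
definition fj_index :: "nat \<Rightarrow> nat \<Rightarrow> (nat \<times> nat) option set" where
  "fj_index r t = insert None (Some ` ({..<t} \<times> {..<r}))"

text \<open>Download time of the (single, low-traffic) request: the copy at the systematic
  server finishes at X None; recovery group j completes when all its r sub-copies
  finish, i.e. at the maximum; the request completes at the first completion.\<close>
definition fj_time :: "nat \<Rightarrow> nat \<Rightarrow> ((nat \<times> nat) option \<Rightarrow> 'a \<Rightarrow> real) \<Rightarrow> 'a \<Rightarrow> real" where
  "fj_time r t X \<omega> =
     Min (insert (X None \<omega>) ((\<lambda>j. Max ((\<lambda>l. X (Some (j, l)) \<omega>) ` {..<r})) ` {..<t}))"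

end

theory Submission
  imports Defs
begin


lemma exp_integrable:
  fixes \<mu> :: real assumes "0 < \<mu>"
  shows "integrable lborel (exponential_density \<mu>)"
proof (rule integrableI_nn_integral_finite[where x=1])
  show "exponential_density \<mu> \<in> borel_measurable lborel"
    unfolding exponential_density_def by measurable
  show "AE x in lborel. 0 \<le> exponential_density \<mu> x"
    using assms by (auto simp: exponential_density_def)
  show "(\<integral>\<^sup>+ x. ennreal (exponential_density \<mu> x) \<partial>lborel) = ennreal 1"
    using nn_integral_erlang_ith_moment[OF assms, of 0 0] by simp
qed

lemma G_integrable:
  fixes \<mu> :: real assumes "0 < \<mu>"
  shows "set_integrable lborel {0<..} (\<lambda>s. exp (- \<mu> * s) * (1 - (1 - exp (- \<mu> * s)) ^ r) ^ t)"
  unfolding set_integrable_def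
proof (rule Bochner_Integration.integrable_bound[where f="\<lambda>x. exponential_density \<mu> x / \<mu>"])
  show "integrable lborel (\<lambda>x. exponential_density \<mu> x / \<mu>)"
    using exp_integrable[OF assms] by simp
  show "(\<lambda>x. indicator {0<..} x *\<^sub>R (exp (- \<mu> * x) * (1 - (1 - exp (- \<mu> * x)) ^ r) ^ t)) \<in> borel_measurable lborel"
    by measurable
  show "AE x in lborel. norm (indicator {0<..} x *\<^sub>R (exp (- \<mu> * x) * (1 - (1 - exp (- \<mu> * x)) ^ r) ^ t))
      \<le> norm (exponential_density \<mu> x / \<mu>)"
  proof (rule AE_I2)
    fix x :: real
    show "norm (indicator {0<..} x *\<^sub>R (exp (- \<mu> * x) * (1 - (1 - exp (- \<mu> * x)) ^ r) ^ t))
      \<le> norm (exponential_density \<mu> x / \<mu>)"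
    proof (cases "0 < x")
      case True
      have e: "exp (- \<mu> * x) \<le> 1" using assms True by simp
      have q0: "0 \<le> 1 - exp (- \<mu> * x)" using e by simp
      have q1: "1 - exp (- \<mu> * x) \<le> 1" by simp
      have "(1 - exp (- \<mu> * x)) ^ r \<le> 1" using q0 q1 by (simp add: power_le_one)
      moreover have "0 \<le> (1 - exp (- \<mu> * x)) ^ r" using q0 by simp
      ultimately have "(1 - (1 - exp (- \<mu> * x)) ^ r) ^ t \<le> 1" "0 \<le> (1 - (1 - exp (- \<mu> * x)) ^ r) ^ t"
        by (auto simp: power_le_one)
      then have "exp (- \<mu> * x) * (1 - (1 - exp (- \<mu> * x)) ^ r) ^ t \<le> exp (- \<mu> * x)"
        by (simp add: mult_left_le)
      then show ?thesis using True assms \<open>0 \<le> (1 - (1 - exp (- \<mu> * x)) ^ r) ^ t\<close>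
        by (simp add: exponential_density_def abs_mult mult.commute)
    qed simp
  qed
qed



lemma G_LBINT:
  fixes \<mu> :: real and r t :: nat
  assumes mu: "0 < \<mu>" and r: "1 \<le> r"
  shows "(LINT s:{0<..}|lborel. exp (- \<mu> * s) * (1 - (1 - exp (- \<mu> * s)) ^ r) ^ t)
     = Beta (1 / real r) (real t + 1) / (\<mu> * real r)"
proof -
  define g where "g = (\<lambda>x::real. (1 - exp (- \<mu> * x)) ^ r)"
  define g' where "g' = (\<lambda>x::real. real r * (1 - exp (- \<mu> * x)) ^ (r - 1) * (\<mu> * exp (- \<mu> * x)))"
  define f where "f = (\<lambda>v::real. v powr (1 / real r - 1) * (1 - v) powr real t / (\<mu> * real r))"
  have g01: "0 < g x \<and> g x < 1" if "0 < x" for x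
  proof -
    have "exp (- \<mu> * x) < 1" using mu that by simp
    moreover have "0 < exp (- \<mu> * x)" by simp
    ultimately have "0 < 1 - exp (- \<mu> * x)" "1 - exp (- \<mu> * x) < 1" by auto
    then show ?thesis unfolding g_def using r
      by (auto simp: power_less_one_iff)
  qed
  have fg: "f (g x) * g' x = exp (- \<mu> * x) * (1 - (1 - exp (- \<mu> * x)) ^ r) ^ t" if "0 < x" for x
  proof -
    define q where "q = 1 - exp (- \<mu> * x)"
    have q: "0 < q" "q < 1" using g01[OF that] unfolding g_def q_def
      using mu that by (auto simp: zero_less_power_eq) 
    have "0 < q" using mu that unfolding q_def by simp
    have a: "(q ^ r) powr (1 / real r - 1) * q ^ (r - 1) = 1"
    proof -
      have "(q ^ r) powr (1 / real r - 1) = q powr (real r * (1 / real r - 1))"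
        using \<open>0 < q\<close> by (simp add: powr_realpow[symmetric] powr_powr)
      also have "real r * (1 / real r - 1) = 1 - real r" using r by (simp add: field_simps)
      finally have "(q ^ r) powr (1 / real r - 1) * q ^ (r - 1) = q powr (1 - real r) * q powr (real (r - 1))"
        using \<open>0 < q\<close> by (simp add: powr_realpow)
      also have "\<dots> = q powr 0" using r \<open>0 < q\<close> by (simp add: powr_add[symmetric] of_nat_diff)
      finally show ?thesis using \<open>0 < q\<close> by simp
    qed
    have b: "(1 - q ^ r) powr real t = (1 - q ^ r) ^ t"
      using g01[OF that] unfolding g_def q_def by (simp add: powr_realpow)
    have "f (g x) * g' x = ((q ^ r) powr (1 / real r - 1) * q ^ (r - 1)) * (1 - q ^ r) powr real t * exp (- \<mu> * x)
       * (\<mu> * real r / (\<mu> * real r))"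
      unfolding f_def g_def g'_def q_def[symmetric] by (simp add: field_simps)
    also have "\<dots> = exp (- \<mu> * x) * (1 - q ^ r) ^ t" using a b mu r by simp
    finally show ?thesis unfolding q_def .
  qed
  have A1: "0 < (\<infinity>::ereal)" by simp
    have A2: "DERIV g x :> g' x" for x
      unfolding g_def g'_def
      by (auto intro!: derivative_eq_intros simp: field_simps)
    have A3: "isCont f (g x)" if "0 < ereal x" "ereal x < \<infinity>" for x
    proof -
      have "0 < x" using that by simp
      then have "0 < g x" "g x < 1" using g01 by auto
      then show ?thesis unfolding f_def using mu r by (auto intro!: continuous_intros)
    qed
    have A4: "isCont g' x" for x unfolding g'_def by (auto intro!: continuous_intros)
    have A5: "0 \<le> f (g x)" for x unfolding f_def using mu by simp
    have A6: "0 \<le> g' x" if "0 \<le> ereal x" for x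
    proof -
      have "0 \<le> x" using that by simp
      then have "exp (- \<mu> * x) \<le> 1" using mu by simp
      then show ?thesis unfolding g'_def using mu by simp
    qed
    have A7: "((ereal \<circ> g \<circ> real_of_ereal) \<longlongrightarrow> ereal 0) (at_right 0)"
      unfolding zero_ereal_def ereal_tendsto_simps g_def using r
      by (auto intro!: tendsto_eq_intros)
    have *: "((\<lambda>x. exp (- \<mu> * x)) \<longlongrightarrow> 0) at_top"
      using mu
      by (auto intro!: exp_at_bot[THEN filterlim_compose] filterlim_tendsto_pos_mult_at_top filterlim_ident
             simp: filterlim_uminus_at_bot)
    have A8: "((ereal \<circ> g \<circ> real_of_ereal) \<longlongrightarrow> ereal 1) (at_left \<infinity>)"
      unfolding ereal_tendsto_simps g_def
      by (intro filterlim_compose[OF _ *]) (auto intro!: tendsto_eq_intros filterlim_ident)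
    have A9: "set_integrable lborel (einterval 0 \<infinity>) (\<lambda>x. f (g x) * g' x)"
    proof -
      have "set_integrable lborel {0<..} (\<lambda>x. f (g x) * g' x)"
        using G_integrable[OF mu, of r t] set_integrable_cong[of lborel lborel "{0<..}" "{0<..}" "\<lambda>x. f (g x) * g' x"
          "\<lambda>s. exp (- \<mu> * s) * (1 - (1 - exp (- \<mu> * s)) ^ r) ^ t"] fg by simp
      moreover have "einterval 0 \<infinity> = {0::real<..}"
        by (auto simp: einterval_def zero_ereal_def)
      ultimately show ?thesis by simp
    qed
  note S = interval_integral_substitution_nonneg[OF A1 A2 A3 A4 A5 A6 A7 A8 A9]
  have e01: "einterval (ereal 0) (ereal 1) = {0::real<..<1}"
    by (auto simp: einterval_def)
  have e0i: "einterval 0 \<infinity> = {0::real<..}"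
    by (auto simp: einterval_def zero_ereal_def)
  have si: "set_integrable lborel {0<..<1} f" using S(1) e01 by simp
  have "(f has_integral (Beta (1 / real r) (real t + 1) / (\<mu> * real r))) {0<..<1}"
  proof -
    have "((\<lambda>v. v powr (1 / real r - 1) * (1 - v) powr (real t + 1 - 1)) has_integral Beta (1 / real r) (real t + 1)) {0..1}"
      using r by (intro has_integral_Beta_real) auto
    then have "((\<lambda>v. v powr (1 / real r - 1) * (1 - v) powr (real t + 1 - 1)) has_integral Beta (1 / real r) (real t + 1)) {0<..<1}"
      by (simp add: has_integral_Icc_iff_Ioo)
    then have "((\<lambda>v. v powr (1 / real r - 1) * (1 - v) powr (real t + 1 - 1) / (\<mu> * real r)) has_integral Beta (1 / real r) (real t + 1) / (\<mu> * real r)) {0<..<1}"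
      by (rule has_integral_divide)
    then show ?thesis unfolding f_def by simp
  qed
  then have "(LINT v:{0<..<1}|lborel. f v) = Beta (1 / real r) (real t + 1) / (\<mu> * real r)"
    using set_borel_integral_eq_integral(2)[OF si] by (simp add: integral_unique)
  moreover have "(LINT v:{0<..<1}|lborel. f v) = (LBINT x=0..\<infinity>. f (g x) * g' x)"
    using S(2) e01 by (simp add: interval_lebesgue_integral_def)
  moreover have "(LBINT x=0..\<infinity>. f (g x) * g' x) = (LINT x:{0<..}|lborel. f (g x) * g' x)"
    using e0i by (simp add: interval_lebesgue_integral_def)
  moreover have "(LINT x:{0<..}|lborel. f (g x) * g' x) = (LINT s:{0<..}|lborel. exp (- \<mu> * s) * (1 - (1 - exp (- \<mu> * s)) ^ r) ^ t)"
    by (rule set_lebesgue_integral_cong) (auto simp: fg)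
  ultimately show ?thesis by simp
qed



lemma tail:
  fixes M :: "'a measure" and X :: "(nat \<times> nat) option \<Rightarrow> 'a \<Rightarrow> real"
    and \<mu> :: real and r t :: nat
  assumes PS: "prob_space M"
    and mu: "0 < \<mu>" and r: "1 \<le> r"
    and indep: "prob_space.indep_vars M (\<lambda>_. borel) X (fj_index r t)"
    and distr: "\<And>i. i \<in> fj_index r t \<Longrightarrow> distributed M lborel (X i) (exponential_density \<mu>)"
  shows "fj_time r t X \<in> borel_measurable M"
    and "\<And>s. 0 \<le> s \<Longrightarrow> measure M {\<omega> \<in> space M. fj_time r t X \<omega> > s}
            = exp (- \<mu> * s) * (1 - (1 - exp (- \<mu> * s)) ^ r) ^ t"
proof -
  interpret P: prob_space M by (rule PS)
  define L :: "nat option set" where "L = insert None (Some ` {..<t})"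
  define K where "K = (\<lambda>k::nat option. case k of None \<Rightarrow> {None} | Some j \<Rightarrow> (\<lambda>l. Some (j,l)) ` {..<r})"
  define F where "F = (\<lambda>k (f :: (nat\<times>nat) option \<Rightarrow> real). case k of None \<Rightarrow> f None
                         | Some j \<Rightarrow> Max ((\<lambda>l. f (Some (j,l))) ` {..<r}))"
  define Y where "Y = (\<lambda>k \<omega>. case k of None \<Rightarrow> X None \<omega>
                         | Some j \<Rightarrow> Max ((\<lambda>l. X (Some (j,l)) \<omega>) ` {..<r}))"
  have Xm: "X i \<in> borel_measurable M" if "i \<in> fj_index r t" for i
    using indep that unfolding P.indep_vars_def by auto
  have KI: "K k \<subseteq> fj_index r t" if "k \<in> L" for k
    using that unfolding K_def L_def fj_index_def by auto
  have disj: "disjoint_family_on K L"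
    unfolding disjoint_family_on_def K_def L_def by auto
  note ind1 = P.indep_vars_restrict[OF indep KI disj]
  have meas: "F k \<in> borel_measurable (PiM (K k) (\<lambda>_. borel))" if "k \<in> L" for k
  proof (cases k)
    case None
    then show ?thesis unfolding F_def K_def
      by (auto intro!: measurable_component_singleton)
  next
    case (Some j)
    then show ?thesis unfolding F_def K_def
      by (auto intro!: borel_measurable_Max measurable_component_singleton)
  qed
  note ind2 = P.indep_vars_compose2[OF ind1 meas]
  have indY: "P.indep_vars (\<lambda>_. borel) Y L"
  proof (rule P.indep_vars_cong[THEN iffD1, OF refl _ refl ind2])
    fix k assume "k \<in> L"
    show "(\<lambda>x. F k (restrict (\<lambda>i. X i x) (K k))) = Y k"
      by (cases k) (auto simp: F_def K_def Y_def intro!: arg_cong[where f=Max] image_cong)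
  qed
  have Ym: "Y k \<in> borel_measurable M" if "k \<in> L" for k
    using indY that unfolding P.indep_vars_def by auto
  have Teq: "fj_time r t X = (\<lambda>\<omega>. Min ((\<lambda>k. Y k \<omega>) ` L))"
    by (auto simp: fun_eq_iff fj_time_def L_def Y_def image_image)
  have finL: "finite L" "L \<noteq> {}" unfolding L_def by auto
  show "fj_time r t X \<in> borel_measurable M"
    unfolding Teq using finL Ym by (auto intro!: borel_measurable_Min)
  fix s :: real assume s: "0 \<le> s"
  have ev1: "{\<omega> \<in> space M. fj_time r t X \<omega> > s} = (\<Inter>k\<in>L. Y k -` {s<..} \<inter> space M)"
    unfolding Teq using finL by (auto simp: Min_gr_iff)
  have "measure M {\<omega> \<in> space M. fj_time r t X \<omega> > s} = (\<Prod>k\<in>L. P.prob (Y k -` {s<..} \<inter> space M))"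
    unfolding ev1 by (rule P.indep_varsD_finite[OF indY finL(2) finL(1)]) auto
  also have "\<dots> = P.prob (Y None -` {s<..} \<inter> space M) * (\<Prod>j<t. P.prob (Y (Some j) -` {s<..} \<inter> space M))"
    unfolding L_def by (simp add: prod.reindex)
  also have "P.prob (Y None -` {s<..} \<inter> space M) = exp (- \<mu> * s)"
  proof -
    have "None \<in> fj_index r t" by (simp add: fj_index_def)
    from P.exponential_distributedD_gt[OF distr[OF this] s mu]
    have "P.prob {x \<in> space M. s < X None x} = exp (- s * \<mu>)" by simp
    moreover have "Y None -` {s<..} \<inter> space M = {x \<in> space M. s < X None x}"
      by (auto simp: Y_def)
    ultimately show ?thesis by (simp add: mult.commute)
  qed
  also have "(\<Prod>j<t. P.prob (Y (Some j) -` {s<..} \<inter> space M)) = (\<Prod>j<t. 1 - (1 - exp (- \<mu> * s)) ^ r)"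
  proof (rule prod.cong[OF refl])
    fix j assume j: "j \<in> {..<t}"
    define J where "J = (\<lambda>l. Some (j,l)) ` {..<r}"
    have JI: "J \<subseteq> fj_index r t" using j unfolding J_def fj_index_def by auto
    have finJ: "finite J" "J \<noteq> {}" using r unfolding J_def by (auto simp: lessThan_empty_iff)
    have cardJ: "card J = r" unfolding J_def by (simp add: card_image inj_on_def)
    have A: "(\<Inter>i\<in>J. X i -` {..s} \<inter> space M) \<in> P.events"
      using finJ JI Xm by (intro sets.finite_INT) auto
    have ne: "{..<r} \<noteq> {}" using r by (auto simp: lessThan_empty_iff)
    have mx: "s < Max ((\<lambda>l. X (Some (j, l)) \<omega>) ` {..<r}) \<longleftrightarrow> (\<exists>l<r. s < X (Some (j, l)) \<omega>)" for \<omega>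
      using ne by (subst Max_gr_iff) auto
    have "Y (Some j) -` {s<..} \<inter> space M = space M - (\<Inter>i\<in>J. X i -` {..s} \<inter> space M)"
      using ne by (auto simp: Y_def J_def mx not_le) (meson lessThan_iff not_le)
    then have "P.prob (Y (Some j) -` {s<..} \<inter> space M) = 1 - P.prob (\<Inter>i\<in>J. X i -` {..s} \<inter> space M)"
      using P.prob_compl[OF A] by simp
    also have "P.prob (\<Inter>i\<in>J. X i -` {..s} \<inter> space M) = (\<Prod>i\<in>J. P.prob (X i -` {..s} \<inter> space M))"
      by (rule P.indep_varsD[OF indep finJ(2) finJ(1) JI]) auto
    also have "\<dots> = (\<Prod>i\<in>J. 1 - exp (- \<mu> * s))"
    proof (rule prod.cong[OF refl])
      fix i assume "i \<in> J"
      then have "i \<in> fj_index r t" using JI by auto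
      from P.exponential_distributedD_le[OF distr[OF this] s mu]
      have "P.prob {x \<in> space M. X i x \<le> s} = 1 - exp (- s * \<mu>)" by simp
      moreover have "X i -` {..s} \<inter> space M = {x \<in> space M. X i x \<le> s}" by auto
      ultimately show "P.prob (X i -` {..s} \<inter> space M) = 1 - exp (- \<mu> * s)" by (simp add: mult.commute)
    qed
    also have "\<dots> = (1 - exp (- \<mu> * s)) ^ r" using cardJ by simp
    finally show "P.prob (Y (Some j) -` {s<..} \<inter> space M) = 1 - (1 - exp (- \<mu> * s)) ^ r" .
  qed
  finally show "measure M {\<omega> \<in> space M. fj_time r t X \<omega> > s}
            = exp (- \<mu> * s) * (1 - (1 - exp (- \<mu> * s)) ^ r) ^ t" by simp
qed



theorem theorem1:
  fixes M :: "'a measure" and X :: "(nat \<times> nat) option \<Rightarrow> 'a \<Rightarrow> real"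
    and \<mu> :: real and r t :: nat
  assumes "prob_space M"
    and "0 < \<mu>" and "1 \<le> r"
    and "prob_space.indep_vars M (\<lambda>_. borel) X (fj_index r t)"
    and "\<And>i. i \<in> fj_index r t \<Longrightarrow> distributed M lborel (X i) (exponential_density \<mu>)"
  shows "(\<forall>s\<ge>0. measure M {\<omega> \<in> space M. fj_time r t X \<omega> > s}
            = exp (- \<mu> * s) * (1 - (1 - exp (- \<mu> * s)) ^ r) ^ t)
     \<and> integrable M (fj_time r t X)
     \<and> integral\<^sup>L M (fj_time r t X) = 1 / (\<mu> * real r) * Beta (real t + 1) (1 / real r)"
proof -
  interpret P: prob_space M by fact
  note Tm[measurable] = tail(1)[OF assms]
  note Tt = tail(2)[OF assms]
  define T where "T = fj_time r t X"
  define G where "G = (\<lambda>s::real. exp (- \<mu> * s) * (1 - (1 - exp (- \<mu> * s)) ^ r) ^ t)"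
  have Tm'[measurable]: "T \<in> borel_measurable M" using Tm by (simp add: T_def)
  have mu: "0 < \<mu>" and r: "1 \<le> r" by fact+
  have G0: "0 \<le> G s" if "0 \<le> s" for s
  proof -
    have "exp (- \<mu> * s) \<le> 1" using mu that by simp
    then have "(1 - exp (- \<mu> * s)) ^ r \<le> 1" by (simp add: power_le_one)
    then show ?thesis unfolding G_def by simp
  qed
  have AEpos: "AE \<omega> in M. 0 < T \<omega>"
  proof -
    have "P.prob {\<omega> \<in> space M. 0 < T \<omega>} = 1"
      using Tt[of 0] r unfolding T_def by (simp add: power_0_left)
    from P.AE_prob_1[OF this] show ?thesis by auto
  qed
  have pair: "pair_sigma_finite M lborel"
    unfolding pair_sigma_finite_def
    using P.sigma_finite_measure_axioms lborel.sigma_finite_measure_axioms by simp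
  define h where "h = (\<lambda>\<omega> s. if 0 < s \<and> s < T \<omega> then 1 else (0::ennreal))"
  have hm: "case_prod h \<in> borel_measurable (M \<Otimes>\<^sub>M lborel)"
    unfolding h_def by measurable
  have step1: "ennreal (T \<omega>) = (\<integral>\<^sup>+ s. h \<omega> s \<partial>lborel)" for \<omega>
  proof -
    have "(\<integral>\<^sup>+ s. h \<omega> s \<partial>lborel) = (\<integral>\<^sup>+ s. indicator {0<..<T \<omega>} s \<partial>lborel)"
      by (rule nn_integral_cong) (auto simp: h_def indicator_def)
    also have "\<dots> = emeasure lborel {0<..<T \<omega>}" by simp
    also have "\<dots> = ennreal (T \<omega>)"
      by (cases "0 \<le> T \<omega>") (auto simp: ennreal_neg)
    finally show ?thesis by simp
  qed
  have step3: "(\<integral>\<^sup>+ \<omega>. h \<omega> s \<partial>M) = ennreal (indicator {0<..} s * G s)" for s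
  proof (cases "0 < s")
    case True
    have "(\<integral>\<^sup>+ \<omega>. h \<omega> s \<partial>M) = (\<integral>\<^sup>+ \<omega>. indicator {\<omega> \<in> space M. s < T \<omega>} \<omega> \<partial>M)"
      by (rule nn_integral_cong) (use True in \<open>auto simp: h_def indicator_def\<close>)
    also have "\<dots> = emeasure M {\<omega> \<in> space M. s < T \<omega>}" by simp
    also have "\<dots> = ennreal (G s)"
      using Tt[of s] True unfolding T_def G_def by (simp add: P.emeasure_eq_measure)
    finally show ?thesis using True by simp
  next
    case False
    then show ?thesis by (simp add: h_def)
  qed
  have N: "(\<integral>\<^sup>+ \<omega>. ennreal (T \<omega>) \<partial>M) = (\<integral>\<^sup>+ s. ennreal (indicator {0<..} s * G s) \<partial>lborel)"
  proof -
    have "(\<integral>\<^sup>+ \<omega>. ennreal (T \<omega>) \<partial>M) = (\<integral>\<^sup>+ \<omega>. (\<integral>\<^sup>+ s. h \<omega> s \<partial>lborel) \<partial>M)"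
      by (simp add: step1)
    also have "\<dots> = (\<integral>\<^sup>+ s. (\<integral>\<^sup>+ \<omega>. h \<omega> s \<partial>M) \<partial>lborel)"
      using pair_sigma_finite.Fubini'[OF pair hm] by simp
    also have "\<dots> = (\<integral>\<^sup>+ s. ennreal (indicator {0<..} s * G s) \<partial>lborel)"
      by (simp add: step3)
    finally show ?thesis .
  qed
  define V where "V = (LINT s:{0<..}|lborel. G s)"
  have Gi: "set_integrable lborel {0<..} G"
    unfolding G_def by (rule G_integrable[OF mu])
  have V0: "0 \<le> V"
    unfolding V_def set_lebesgue_integral_def
    by (rule Bochner_Integration.integral_nonneg) (auto simp: G0 indicator_def)
  have NV: "(\<integral>\<^sup>+ s. ennreal (indicator {0<..} s * G s) \<partial>lborel) = ennreal V"
    unfolding V_def set_lebesgue_integral_def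
    using Gi unfolding set_integrable_def
    by (subst nn_integral_eq_integral) (auto simp: G0 indicator_def)
  have HB: "has_bochner_integral M T V"
    by (rule has_bochner_integral_nn_integral) (use AEpos V0 N NV in \<open>auto elim: AE_mp\<close>)
  have Vval: "V = Beta (1 / real r) (real t + 1) / (\<mu> * real r)"
    unfolding V_def G_def by (rule G_LBINT[OF mu r])
  show ?thesis
    using Tt HB Vval
    unfolding T_def
    by (auto simp: has_bochner_integral_iff Beta_commute)
qed

end
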